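(* Let $K$ be a complete metric space and let $A$ be a closed subalgebra of $C_b(K)$. If $\rho A$ is a norming subset of $A$, then the set of all smooth points of the closed unit ball $B_A$ contains a dense $G_\delta$ subset of the unit sphere $S_A$.
   Context: $C_b(K)$ is the Banach space of bounded continuous scalar-valued functions on $K$ with the supremum norm. A nonzero $f\in C_b(K)$ is a strong peak function at $t\in K$ if every sequence $\{t_n\}$ in $K$ with $\lim_n|f(t_n)|=\|f\|$ converges to $t$. A point $t\in K$ is a strong peak point for $A$ if there is a strong peak function $f\in A$ with $\|f\|=|f(t)|$; $\rho A$ is the set of all strong peak points for $A$. A subset $F\subset K$ is a norming subset for $A$ if $\|f\|=\sup_{t\in F}|f(t)|$ for all $f\in A$. A point $x$ of the unit ball $B_Z$ of a Banach space $Z$ is a smooth point if there is a unique $z^*\in B_{Z^*}$ with $\operatorname{Re} z^*(x)=1$. *)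

theory Defs
  imports "HOL-Analysis.Analysis"
begin

text \<open>Scalars: the field 'b (instantiated with real or complex). Elements of C_b(K)
  are the bounded continuous functions 'a to 'b with the sup norm.\<close>

definition subalgebra_Cb :: "('a::topological_space \<Rightarrow>\<^sub>C 'b::real_normed_field) set \<Rightarrow> bool" where
  "subalgebra_Cb A \<longleftrightarrow> 0 \<in> A
     \<and> (\<forall>f\<in>A. \<forall>g\<in>A. f + g \<in> A)
     \<and> (\<forall>f\<in>A. \<forall>c::'b. \<exists>h\<in>A. \<forall>t. apply_bcontfun h t = c * apply_bcontfun f t)
     \<and> (\<forall>f\<in>A. \<forall>g\<in>A. \<exists>h\<in>A. \<forall>t. apply_bcontfun h t = apply_bcontfun f t * apply_bcontfun g t)"

definition strong_peak_fun :: "('a::topological_space \<Rightarrow>\<^sub>C 'b::real_normed_field) \<Rightarrow> 'a \<Rightarrow> bool" where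
  "strong_peak_fun f t \<longleftrightarrow> f \<noteq> 0 \<and>
     (\<forall>s::nat \<Rightarrow> 'a. ((\<lambda>n. norm (apply_bcontfun f (s n))) \<longlonglongrightarrow> norm f) \<longrightarrow> s \<longlonglongrightarrow> t)"

definition strong_peak_points :: "('a::topological_space \<Rightarrow>\<^sub>C 'b::real_normed_field) set \<Rightarrow> 'a set" where
  "strong_peak_points A = {t. \<exists>f\<in>A. strong_peak_fun f t \<and> norm f = norm (apply_bcontfun f t)}"

text \<open>F is norming: norm f = sup over t in F of norm (f t), written as: norm f is below every
  nonnegative upper bound of the values norm (f t), t in F, (the reverse inequality is automatic).\<close>
definition norming :: "'a set \<Rightarrow> ('a::topological_space \<Rightarrow>\<^sub>C 'b::real_normed_field) set \<Rightarrow> bool" where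
  "norming F A \<longleftrightarrow> (\<forall>f\<in>A. \<forall>r\<ge>0. (\<forall>t\<in>F. norm (apply_bcontfun f t) \<le> r) \<longrightarrow> norm f \<le> r)"

text \<open>Elements of the closed unit ball of the dual space A*: functionals 'b-linear on A
  with norm at most 1 (two functionals are identified when they agree on A).\<close>
definition dual_ball :: "('a::topological_space \<Rightarrow>\<^sub>C 'b::real_normed_field) set \<Rightarrow> (('a \<Rightarrow>\<^sub>C 'b) \<Rightarrow> 'b) set" where
  "dual_ball A = {\<phi>. (\<forall>f\<in>A. \<forall>g\<in>A. \<phi> (f + g) = \<phi> f + \<phi> g)
       \<and> (\<forall>f\<in>A. \<forall>h\<in>A. \<forall>c::'b. (\<forall>t. apply_bcontfun h t = c * apply_bcontfun f t) \<longrightarrow> \<phi> h = c * \<phi> f)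
       \<and> (\<forall>f\<in>A. norm (\<phi> f) \<le> norm f)}"

text \<open>Smooth point of the unit ball \<open>B_A\<close>; \<open>re\<close> is the real part map of the scalar field
  (identity for real scalars, \<open>Re\<close> for complex scalars).\<close>
definition smooth_point :: "('b \<Rightarrow> real) \<Rightarrow> ('a::topological_space \<Rightarrow>\<^sub>C 'b::real_normed_field) set \<Rightarrow> ('a \<Rightarrow>\<^sub>C 'b) \<Rightarrow> bool" where
  "smooth_point re A x \<longleftrightarrow> x \<in> A \<and> norm x \<le> 1 \<and>
     (\<exists>\<phi>\<in>dual_ball A. re (\<phi> x) = 1) \<and>
     (\<forall>\<phi>\<in>dual_ball A. \<forall>\<psi>\<in>dual_ball A. re (\<phi> x) = 1 \<and> re (\<psi> x) = 1 \<longrightarrow> (\<forall>f\<in>A. \<phi> f = \<psi> f))"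

definition unit_sphere_A :: "('a::topological_space \<Rightarrow>\<^sub>C 'b::real_normed_field) set \<Rightarrow> ('a \<Rightarrow>\<^sub>C 'b) set" where
  "unit_sphere_A A = {f\<in>A. norm f = 1}"

definition gdelta_in :: "'c::topological_space set \<Rightarrow> 'c set \<Rightarrow> bool" where
  "gdelta_in S G \<longleftrightarrow> (\<exists>U::nat \<Rightarrow> 'c set. (\<forall>n. openin (top_of_set S) (U n)) \<and> G = (\<Inter>n. U n))"

definition conclusion_smooth :: "('b \<Rightarrow> real) \<Rightarrow> ('a::topological_space \<Rightarrow>\<^sub>C 'b::real_normed_field) set \<Rightarrow> bool" where
  "conclusion_smooth re A \<longleftrightarrow> (\<exists>G. G \<subseteq> unit_sphere_A A \<and> gdelta_in (unit_sphere_A A) G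
        \<and> unit_sphere_A A \<subseteq> closure G \<and> G \<subseteq> {x. smooth_point re A x})"

end

theory Submission
  imports Defs
begin


abbreviation (input) ap where "ap \<equiv> apply_bcontfun"

lemma sub_add: "subalgebra_Cb A \<Longrightarrow> f\<in>A \<Longrightarrow> g\<in>A \<Longrightarrow> f+g\<in>A"
  unfolding subalgebra_Cb_def by blast

lemma sub_smult: "subalgebra_Cb A \<Longrightarrow> f\<in>A \<Longrightarrow> \<exists>h\<in>A. \<forall>t. ap h t = c * ap f t"
  unfolding subalgebra_Cb_def by blast

lemma sub_mult: "subalgebra_Cb A \<Longrightarrow> f\<in>A \<Longrightarrow> g\<in>A \<Longrightarrow> \<exists>h\<in>A. \<forall>t. ap h t = ap f t * ap g t"
  unfolding subalgebra_Cb_def by blast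

lemma sub_scaleR:
  fixes A :: "('a::topological_space \<Rightarrow>\<^sub>C 'b::real_normed_field) set"
  assumes "subalgebra_Cb A" "f\<in>A" shows "c *\<^sub>R f \<in> A"
proof -
  obtain h where "h\<in>A" "\<And>t. ap h t = of_real c * ap f t" using sub_smult[OF assms] by blast
  moreover have "h = c *\<^sub>R f" by (rule bcontfun_eqI) (simp add: calculation scaleR_conv_of_real)
  ultimately show ?thesis by simp
qed

lemma sub_diff:
  fixes A :: "('a::topological_space \<Rightarrow>\<^sub>C 'b::real_normed_field) set"
  assumes "subalgebra_Cb A" "f\<in>A" "g\<in>A" shows "f - g \<in> A"
proof -
  have "f + (-1) *\<^sub>R g \<in> A" by (rule sub_add[OF assms(1,2) sub_scaleR[OF assms(1,3)]])
  moreover have "f - g = f + (-1) *\<^sub>R g" by simp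
  ultimately show ?thesis by (simp only:)
qed

lemma sub_pow:
  fixes A :: "('a::topological_space \<Rightarrow>\<^sub>C 'b::real_normed_field) set"
  assumes "subalgebra_Cb A" "g\<in>A" shows "\<exists>h\<in>A. \<forall>t. ap h t = (ap g t)^Suc k"
proof (induction k)
  case 0 then show ?case using assms by auto
next
  case (Suc k)
  then obtain h where "h\<in>A" "\<forall>t. ap h t = (ap g t)^Suc k" by blast
  then obtain w where "w\<in>A" "\<forall>t. ap w t = ap h t * ap g t" using sub_mult[OF assms(1) _ assms(2)] by blast
  then show ?case using \<open>\<forall>t. ap h t = (ap g t)^Suc k\<close> by (auto simp: mult.commute)
qed



lemma cont_ap:
  fixes f :: "'a::metric_space \<Rightarrow>\<^sub>C 'b::real_normed_vector"
  assumes "0 < e" shows "\<exists>d>0. \<forall>s. dist s t < d \<longrightarrow> dist (ap f s) (ap f t) < e"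
proof -
  have "continuous_on UNIV (ap f)" by (rule continuous_on_apply_bcontfun)
  hence "isCont (ap f) t" by (metis UNIV_I continuous_on_eq_continuous_at open_UNIV)
  thus ?thesis using assms unfolding continuous_at_eps_delta by blast
qed

definition peak :: "('a::metric_space \<Rightarrow>\<^sub>C 'b::real_normed_vector) \<Rightarrow> 'a \<Rightarrow> bool" where
  "peak f t \<longleftrightarrow> norm (ap f t) = norm f \<and>
     (\<forall>\<rho>>0. \<exists>\<delta>>0. \<forall>s. \<rho> \<le> dist s t \<longrightarrow> norm (ap f s) \<le> norm f - \<delta>)"

lemma spf_peak:
  fixes f :: "'a::metric_space \<Rightarrow>\<^sub>C 'b::real_normed_field"
  assumes sp: "strong_peak_fun f t" and nt: "norm f = norm (ap f t)"
  shows "peak f t"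
  unfolding peak_def
proof (intro conjI allI impI)
  show "norm (ap f t) = norm f" using nt by simp
  fix \<rho> :: real assume "\<rho> > 0"
  show "\<exists>\<delta>>0. \<forall>s. \<rho> \<le> dist s t \<longrightarrow> norm (ap f s) \<le> norm f - \<delta>"
  proof (rule ccontr)
    assume "\<not> ?thesis"
    hence all: "\<forall>\<delta>>0. \<exists>s. \<rho> \<le> dist s t \<and> norm (ap f s) > norm f - \<delta>"
      by (simp add: not_le)
    have "\<forall>m. \<exists>s. \<rho> \<le> dist s t \<and> norm (ap f s) > norm f - inverse (real (Suc m))"
    proof
      fix m
      have "inverse (real (Suc m)) > 0" by simp
      thus "\<exists>s. \<rho> \<le> dist s t \<and> norm (ap f s) > norm f - inverse (real (Suc m))" using all by blast
    qed
    from choice[OF this] obtain s where s: "\<forall>m. \<rho> \<le> dist (s m) t \<and>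
        norm (ap f (s m)) > norm f - inverse (real (Suc m))" by blast
    have "(\<lambda>m. norm (ap f (s m))) \<longlonglongrightarrow> norm f"
    proof (rule tendsto_sandwich[of "\<lambda>m. norm f + - inverse (real (Suc m))" _ _ "\<lambda>m. norm f"])
      show "\<forall>\<^sub>F n in sequentially. norm f + - inverse (real (Suc n)) \<le> norm (ap f (s n))"
        using s by (simp add: less_imp_le)
      show "\<forall>\<^sub>F n in sequentially. norm (ap f (s n)) \<le> norm f" by (simp add: norm_bounded)
      show "(\<lambda>m. norm f + - inverse (real (Suc m))) \<longlonglongrightarrow> norm f"
        by (rule LIMSEQ_inverse_real_of_nat_add_minus)
    qed simp
    moreover have "\<forall>s. ((\<lambda>n. norm (ap f (s n))) \<longlonglongrightarrow> norm f) \<longrightarrow> s \<longlonglongrightarrow> t"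
      using sp unfolding strong_peak_fun_def by (rule conjunct2)
    ultimately have "s \<longlonglongrightarrow> t" by simp
    then obtain no where "\<forall>n\<ge>no. dist (s n) t < \<rho>" using \<open>\<rho>>0\<close> unfolding lim_sequentially by blast
    hence "dist (s no) t < \<rho>" by simp
    moreover have "\<rho> \<le> dist (s no) t" using s by simp
    ultimately show False by simp
  qed
qed

definition Uset :: "('a::metric_space \<Rightarrow>\<^sub>C 'b::real_normed_vector) set \<Rightarrow> nat \<Rightarrow> ('a \<Rightarrow>\<^sub>C 'b) set" where
  "Uset A n = {f\<in>A. \<exists>t r. 0 \<le> r \<and> r < norm f \<and> (\<forall>s. 1 / real (Suc n) \<le> dist s t \<longrightarrow> norm (ap f s) \<le> r)}"

lemma small_inv: "0 < (e::real) \<Longrightarrow> \<exists>N. \<forall>n\<ge>N. 1 / real (Suc n) < e"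
proof -
  assume "0 < e"
  then obtain N where N: "N \<noteq> 0" "inverse (real N) < e" using real_arch_inverse by blast
  have "1 / real (Suc n) < e" if "n \<ge> N" for n
  proof -
    have "1 / real (Suc n) \<le> inverse (real N)" using that N(1)
      by (simp add: divide_inverse le_imp_inverse_le)
    thus ?thesis using N(2) by linarith
  qed
  thus ?thesis by blast
qed

lemma inter_peak:
  fixes f :: "'a::complete_space \<Rightarrow>\<^sub>C 'b::real_normed_vector"
  assumes "\<forall>n. f \<in> Uset A n"
  shows "\<exists>t. peak f t"
proof -
  have "\<forall>n. \<exists>t r. 0 \<le> r \<and> r < norm f \<and> (\<forall>s. 1 / real (Suc n) \<le> dist s t \<longrightarrow> norm (ap f s) \<le> r)"
    using assms unfolding Uset_def by blast
  from choice[OF this] obtain T where "\<forall>n. \<exists>r. 0 \<le> r \<and> r < norm f \<and> (\<forall>s. 1 / real (Suc n) \<le> dist s (T n) \<longrightarrow> norm (ap f s) \<le> r)"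
    by blast
  from choice[OF this] obtain R where TR0: "\<forall>n. 0 \<le> R n \<and> R n < norm f \<and> (\<forall>s. 1 / real (Suc n) \<le> dist s (T n) \<longrightarrow> norm (ap f s) \<le> R n)"
    by blast
  hence TR: "\<And>n. 0 \<le> R n" "\<And>n. R n < norm f"
    "\<And>n s. 1 / real (Suc n) \<le> dist s (T n) \<Longrightarrow> norm (ap f s) \<le> R n" by auto
  have key: "dist (T n) (T m) < 1 / real (Suc n) + 1 / real (Suc m)" for n m
  proof -
    have "\<exists>s. norm (ap f s) > max (R n) (R m)"
    proof (rule ccontr)
      assume "\<not> ?thesis"
      hence "\<And>s. norm (ap f s) \<le> max (R n) (R m)" by (simp add: not_less le_max_iff_disj)
      hence "norm f \<le> max (R n) (R m)" by (rule norm_bound)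
      thus False using TR(2)[of n] TR(2)[of m] by linarith
    qed
    then obtain s where s: "norm (ap f s) > max (R n) (R m)" by blast
    have "\<not> 1 / real (Suc n) \<le> dist s (T n)"
    proof
      assume "1 / real (Suc n) \<le> dist s (T n)"
      hence "norm (ap f s) \<le> R n" by (rule TR(3))
      thus False using s by linarith
    qed
    moreover have "\<not> 1 / real (Suc m) \<le> dist s (T m)"
    proof
      assume "1 / real (Suc m) \<le> dist s (T m)"
      hence "norm (ap f s) \<le> R m" by (rule TR(3))
      thus False using s by linarith
    qed
    ultimately have "dist s (T n) < 1 / real (Suc n)" "dist s (T m) < 1 / real (Suc m)" by auto
    then show ?thesis using dist_triangle2[of "T n" "T m" s] by (simp add: dist_commute)
  qed
  have "Cauchy T"
  proof (rule metric_CauchyI)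
    fix e :: real assume "0 < e"
    hence "\<exists>N. \<forall>n\<ge>N. 1 / real (Suc n) < e/2" by (intro small_inv) simp
    then obtain N where N: "\<And>n. n \<ge> N \<Longrightarrow> 1 / real (Suc n) < e/2" by blast
    show "\<exists>M. \<forall>m\<ge>M. \<forall>n\<ge>M. dist (T m) (T n) < e"
    proof (intro exI allI impI)
      fix m n assume "m \<ge> N" "n \<ge> N"
      have "dist (T m) (T n) < 1 / real (Suc m) + 1 / real (Suc n)" by (rule key)
      with N[OF \<open>m \<ge> N\<close>] N[OF \<open>n \<ge> N\<close>] show "dist (T m) (T n) < e" by linarith
    qed
  qed
  then obtain t0 where t0: "T \<longlonglongrightarrow> t0" using Cauchy_convergent convergent_def by blast
  have rho: "\<exists>\<delta>>0. \<forall>s. \<rho> \<le> dist s t0 \<longrightarrow> norm (ap f s) \<le> norm f - \<delta>" if "\<rho> > 0" for \<rho>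
  proof -
    have "\<exists>N. \<forall>n\<ge>N. 1 / real (Suc n) < \<rho>/2" by (rule small_inv) (simp add: that)
    then obtain N1 where N1: "\<And>n. n \<ge> N1 \<Longrightarrow> 1 / real (Suc n) < \<rho>/2" by blast
    have "\<exists>no. \<forall>n\<ge>no. dist (T n) t0 < \<rho>/2"
    proof -
      have "\<rho>/2 > 0" using \<open>\<rho> > 0\<close> by simp
      with t0 show ?thesis unfolding lim_sequentially by blast
    qed
    then obtain N2 where N2: "\<And>n. n \<ge> N2 \<Longrightarrow> dist (T n) t0 < \<rho>/2" by blast
    define n where "n = max N1 N2"
    have a: "1 / real (Suc n) < \<rho>/2" "dist (T n) t0 < \<rho>/2" using N1 N2 n_def by auto
    have "norm (ap f s) \<le> norm f - (norm f - R n)" if "\<rho> \<le> dist s t0" for s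
    proof -
      have "1 / real (Suc n) \<le> dist s (T n)"
        using a that dist_triangle[of s t0 "T n"] by (simp add: dist_commute)
      thus ?thesis using TR(3) by simp
    qed
    moreover have "norm f - R n > 0" using TR(2) by simp
    ultimately show ?thesis by blast
  qed
  have "norm (ap f t0) = norm f"
  proof (rule ccontr)
    assume "norm (ap f t0) \<noteq> norm f"
    hence lt: "norm (ap f t0) < norm f" using norm_bounded[of f t0] by linarith
    define \<epsilon> where "\<epsilon> = norm f - norm (ap f t0)"
    have "\<epsilon> > 0" using lt \<epsilon>_def by simp
    then obtain d where d: "d > 0" "\<And>s. dist s t0 < d \<Longrightarrow> dist (ap f s) (ap f t0) < \<epsilon>/2"
      using cont_ap[of "\<epsilon>/2" t0 f] by auto
    obtain \<delta> where \<delta>: "\<delta> > 0" "\<And>s. d \<le> dist s t0 \<Longrightarrow> norm (ap f s) \<le> norm f - \<delta>"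
      using rho[OF d(1)] by blast
    have "norm (ap f s) \<le> norm f - min (\<epsilon>/2) \<delta>" for s
    proof (cases "dist s t0 < d")
      case True
      hence "norm (ap f s) < norm (ap f t0) + \<epsilon>/2" using d(2)[of s] norm_triangle_ineq2[of "ap f s" "ap f t0"]
        by (simp add: dist_norm)
      moreover have "min (\<epsilon>/2) \<delta> \<le> \<epsilon>/2" by simp
      ultimately show ?thesis using \<epsilon>_def by linarith
    next
      case False
      hence "d \<le> dist s t0" by simp
      hence "norm (ap f s) \<le> norm f - \<delta>" by (rule \<delta>(2))
      moreover have "min (\<epsilon>/2) \<delta> \<le> \<delta>" by simp
      ultimately show ?thesis by linarith
    qed
    hence "norm f \<le> norm f - min (\<epsilon>/2) \<delta>" by (rule norm_bound)
    thus False using \<open>\<epsilon>>0\<close> \<delta>(1) by simp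
  qed
  thus ?thesis using rho unfolding peak_def by blast
qed

lemma Uset_pos: "f \<in> Uset A n \<Longrightarrow> norm f > 0"
  unfolding Uset_def by auto



lemma norm_diff_pt:
  fixes f g :: "'a::topological_space \<Rightarrow>\<^sub>C 'b::real_normed_vector"
  shows "norm (ap g s) \<le> norm (ap f s) + norm (g - f)"
proof -
  have "norm (ap (g - f) s) \<le> norm (g - f)" by (rule norm_bounded)
  hence "norm (ap g s - ap f s) \<le> norm (g - f)" by simp
  thus ?thesis using norm_triangle_ineq2[of "ap g s" "ap f s"] by linarith
qed

lemma Uset_open:
  fixes A :: "('a::metric_space \<Rightarrow>\<^sub>C 'b::real_normed_vector) set"
  shows "openin (top_of_set A) (Uset A n)"
  unfolding openin_euclidean_subtopology_iff
proof (intro conjI ballI)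
  show "Uset A n \<subseteq> A" unfolding Uset_def by auto
  fix f assume "f \<in> Uset A n"
  then obtain t r where tr: "0 \<le> r" "r < norm f"
    "\<And>s. 1 / real (Suc n) \<le> dist s t \<Longrightarrow> norm (ap f s) \<le> r"
    unfolding Uset_def by blast
  define e where "e = (norm f - r) / 3"
  have e: "e > 0" using tr e_def by simp
  have "\<forall>g\<in>A. dist g f < e \<longrightarrow> g \<in> Uset A n"
  proof (intro ballI impI)
    fix g assume g: "g \<in> A" "dist g f < e"
    hence ng: "norm (g - f) < e" by (simp add: dist_norm)
    have "norm f \<le> norm g + norm (g - f)" using norm_triangle_ineq2[of f g] norm_minus_commute[of g f] by linarith
    moreover have "3 * e = norm f - r" using e_def by simp
    ultimately have 1: "r + e < norm g" using ng e by linarith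
    have 2: "norm (ap g s) \<le> r + e" if "1 / real (Suc n) \<le> dist s t" for s
      using norm_diff_pt[of g s f] tr(3)[OF that] ng by linarith
    have "0 \<le> r + e" using tr e by simp
    thus "g \<in> Uset A n" unfolding Uset_def using g(1) 1 2 by blast
  qed
  thus "\<exists>e>0. \<forall>g\<in>A. dist g f < e \<longrightarrow> g \<in> Uset A n" using e by blast
qed

lemma Uset_scale:
  fixes A :: "('a::metric_space \<Rightarrow>\<^sub>C 'b::real_normed_field) set"
  assumes "subalgebra_Cb A" "f \<in> Uset A n" "c > 0"
  shows "c *\<^sub>R f \<in> Uset A n"
proof -
  obtain t r where tr: "f \<in> A" "0 \<le> r" "r < norm f"
    "\<And>s. 1 / real (Suc n) \<le> dist s t \<Longrightarrow> norm (ap f s) \<le> r"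
    using assms(2) unfolding Uset_def by blast
  have "c *\<^sub>R f \<in> A" using sub_scaleR[OF assms(1) tr(1)] .
  moreover have "0 \<le> c * r" using tr assms by simp
  moreover have "c * r < norm (c *\<^sub>R f)" using tr assms by simp
  moreover have "norm (ap (c *\<^sub>R f) s) \<le> c * r" if "1 / real (Suc n) \<le> dist s t" for s
    using tr(4)[OF that] assms(3) by (simp add: mult_left_mono)
  ultimately show ?thesis unfolding Uset_def by blast
qed

lemma unit_lam:
  fixes z :: "'b::real_normed_field"
  shows "\<exists>lam. norm lam = 1 \<and> lam * of_real (norm z) = z"
proof (cases "z = 0")
  case True thus ?thesis by (intro exI[of _ 1]) simp
next
  case False
  hence "norm (z / of_real (norm z)) = 1" by (simp add: norm_divide)
  moreover have "z / of_real (norm z) * of_real (norm z) = z" using False by simp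
  ultimately show ?thesis by blast
qed

lemma Uset_dense:
  fixes A :: "('a::metric_space \<Rightarrow>\<^sub>C 'b::real_normed_field) set"
  assumes sub: "subalgebra_Cb A" and nrm: "norming (strong_peak_points A) A"
    and ne: "strong_peak_points A \<noteq> {}" and fA: "f \<in> A" and \<epsilon>: "\<epsilon> > 0"
  shows "\<exists>h\<in>Uset A n. dist h f < \<epsilon>"
proof -
  define e where "e = \<epsilon>/2"
  have e: "e > 0" "e < \<epsilon>" using \<epsilon> e_def by auto
  obtain t where t: "t \<in> strong_peak_points A" "norm (ap f t) > norm f - e/2"
  proof (cases "norm f - e/2 < 0")
    case True
    then obtain t where "t \<in> strong_peak_points A" using ne by blast
    moreover have "norm (ap f t) > norm f - e/2" using True norm_ge_zero[of "ap f t"] by linarith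
    ultimately show ?thesis using that by blast
  next
    case False
    show ?thesis
    proof (rule ccontr)
      assume "\<not> ?thesis"
      have "\<forall>t\<in>strong_peak_points A. norm (ap f t) \<le> norm f - e/2"
      proof
        fix t assume tt: "t \<in> strong_peak_points A"
        show "norm (ap f t) \<le> norm f - e/2"
        proof (rule ccontr)
          assume "\<not> norm (ap f t) \<le> norm f - e/2"
          hence "norm (ap f t) > norm f - e/2" by simp
          from that[OF tt this] \<open>\<not> thesis\<close> show False by simp
        qed
      qed
      hence "norm f \<le> norm f - e/2" using nrm fA False unfolding norming_def by auto
      thus False using e by simp
    qed
  qed
  obtain g where g: "g \<in> A" "strong_peak_fun g t" "norm g = norm (ap g t)"
    using t(1) unfolding strong_peak_points_def by blast
  have pk: "peak g t" by (rule spf_peak[OF g(2,3)])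
  have "g \<noteq> 0" using g(2) unfolding strong_peak_fun_def by simp
  hence ng: "norm g > 0" by simp
  hence gt0: "ap g t \<noteq> 0" using g(3) by auto
  have "1 / real (Suc n) > 0" by simp
  then obtain \<delta> where \<delta>: "\<delta> > 0" "\<And>s. 1 / real (Suc n) \<le> dist s t \<Longrightarrow> norm (ap g s) \<le> norm g - \<delta>"
    using pk unfolding peak_def by blast
  define q where "q = max 0 (1 - \<delta> / norm g)"
  have q: "0 \<le> q" "q < 1" using \<delta>(1) ng q_def by auto
  obtain u where u: "u \<in> A" "\<And>s. ap u s = inverse (ap g t) * ap g s"
    using sub_smult[OF sub g(1)] by blast
  have nu: "norm (ap u s) = norm (ap g s) / norm g" for s
    using u(2)[of s] g(3) by (simp add: norm_mult norm_inverse divide_inverse mult.commute)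
  have u1: "norm (ap u s) \<le> 1" for s
    using nu[of s] norm_bounded[of g s] ng by simp
  have ut: "ap u t = 1" using u(2)[of t] gt0 by simp
  have ufar: "norm (ap u s) \<le> q" if "1 / real (Suc n) \<le> dist s t" for s
  proof -
    have "norm (ap g s) / norm g \<le> (norm g - \<delta>) / norm g"
      using \<delta>(2)[OF that] ng by (simp add: divide_right_mono)
    also have "\<dots> = 1 - \<delta> / norm g" using ng by (simp add: diff_divide_distrib)
    finally show ?thesis using nu[of s] q_def by simp
  qed
  obtain k where k: "q ^ k < 1/2" using real_arch_pow_inv[of "1/2" q] q by auto
  then obtain k' where k': "k = Suc k'" by (cases k) auto
  obtain w where w: "w \<in> A" "\<And>s. ap w s = (ap u s) ^ Suc k'"
    using sub_pow[OF sub u(1)] by blast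
  have w1: "norm (ap w s) \<le> 1" for s
  proof -
    have "norm (ap w s) = norm (ap u s) ^ Suc k'" by (simp only: w(2) norm_power)
    also have "\<dots> \<le> 1" by (rule power_le_one[OF norm_ge_zero u1])
    finally show ?thesis .
  qed
  have wt: "ap w t = 1" using w(2) ut by simp
  have wfar: "norm (ap w s) < 1/2" if "1 / real (Suc n) \<le> dist s t" for s
  proof -
    have "norm (ap w s) = norm (ap u s) ^ Suc k'" by (simp only: w(2) norm_power)
    also have "\<dots> \<le> q ^ Suc k'" by (rule power_mono[OF ufar[OF that] norm_ge_zero])
    finally show ?thesis using k k' by simp
  qed
  obtain lam where lam: "norm lam = 1" "lam * of_real (norm (ap f t)) = ap f t"
    using unit_lam by blast
  obtain v where v: "v \<in> A" "\<And>s. ap v s = (of_real e * lam) * ap w s"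
    using sub_smult[OF sub w(1)] by blast
  have nv: "norm (ap v s) = e * norm (ap w s)" for s
    using e(1) by (simp add: v(2) norm_mult lam(1))
  define h where "h = f + v"
  have hA: "h \<in> A" unfolding h_def by (rule sub_add[OF sub fA v(1)])
  have "norm v \<le> e"
  proof (rule norm_bound)
    fix s show "norm (ap v s) \<le> e" using nv[of s] w1[of s] e(1)
      by (simp add: mult_left_le)
  qed
  hence dh: "dist h f < \<epsilon>" unfolding h_def dist_norm using e by simp
  have "ap h t = lam * of_real (norm (ap f t) + e)"
    unfolding h_def using lam(2) by (simp add: v(2) wt algebra_simps)
  hence "norm (ap h t) = norm lam * norm (of_real (norm (ap f t) + e) :: 'b)" by (simp only: norm_mult)
  moreover have "norm (of_real (norm (ap f t) + e) :: 'b) = norm (ap f t) + e"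
    using e(1) by (simp only: norm_of_real) simp
  ultimately have "norm (ap h t) = norm (ap f t) + e" using lam(1) by simp
  hence nh: "norm h > norm f + e/2" using norm_bounded[of h t] t(2) by linarith
  have far: "norm (ap h s) \<le> norm f + e/2" if "1 / real (Suc n) \<le> dist s t" for s
  proof -
    have "norm (ap h s) \<le> norm (ap f s) + norm (ap v s)" unfolding h_def by (simp add: norm_triangle_ineq)
    also have "\<dots> \<le> norm f + e/2"
    proof -
      have "e * norm (ap w s) \<le> e * (1/2)" using wfar[OF that] e(1) by (intro mult_left_mono) auto
      thus ?thesis using norm_bounded[of f s] nv[of s] by simp
    qed
    finally show ?thesis .
  qed
  have "0 \<le> norm f + e/2" using e by simp
  hence "h \<in> Uset A n" unfolding Uset_def using hA nh far by blast
  thus ?thesis using dh by blast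
qed



lemma eval_dual:
  fixes A :: "('a::topological_space \<Rightarrow>\<^sub>C 'b::real_normed_field) set"
  assumes "norm (ap x t) = 1"
  shows "(\<lambda>g. ap g t / ap x t) \<in> dual_ball A"
  unfolding dual_ball_def
proof (intro CollectI conjI ballI allI impI)
  fix f g :: "'a \<Rightarrow>\<^sub>C 'b"
  show "ap (f + g) t / ap x t = ap f t / ap x t + ap g t / ap x t" by (simp add: add_divide_distrib)
next
  fix f h :: "'a \<Rightarrow>\<^sub>C 'b" and c :: 'b
  assume "\<forall>t. ap h t = c * ap f t"
  thus "ap h t / ap x t = c * (ap f t / ap x t)" by simp
next
  fix f :: "'a \<Rightarrow>\<^sub>C 'b"
  show "norm (ap f t / ap x t) \<le> norm f" using assms norm_bounded[of f t] by (simp add: norm_divide)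
qed

lemma uniq:
  fixes A :: "('a::metric_space \<Rightarrow>\<^sub>C 'b::real_normed_field) set"
  assumes sub: "subalgebra_Cb A" and xA: "x \<in> A" and nx: "norm x = 1" and pk: "peak x t"
    and phi: "\<phi> \<in> dual_ball A" and phix: "\<phi> x = 1" and gA: "g \<in> A"
  shows "\<phi> g = ap g t / ap x t"
proof -
  have add: "\<And>f g. f\<in>A \<Longrightarrow> g\<in>A \<Longrightarrow> \<phi> (f + g) = \<phi> f + \<phi> g"
    and hom: "\<And>f h c. f\<in>A \<Longrightarrow> h\<in>A \<Longrightarrow> (\<forall>t. ap h t = c * ap f t) \<Longrightarrow> \<phi> h = c * \<phi> f"
    and bd: "\<And>f. f\<in>A \<Longrightarrow> norm (\<phi> f) \<le> norm f"
    using phi unfolding dual_ball_def by auto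
  have xt: "norm (ap x t) = 1" using pk nx unfolding peak_def by simp
  hence xt0: "ap x t \<noteq> 0" by auto
  define c where "c = ap g t / ap x t"
  obtain z where z: "z \<in> A" "\<And>s. ap z s = c * ap x s" using sub_smult[OF sub xA] by blast
  have phz: "\<phi> z = c" using hom[OF xA z(1)] z(2) phix by simp
  define h where "h = g - z"
  have hA: "h \<in> A" unfolding h_def by (rule sub_diff[OF sub gA z(1)])
  have ht: "ap h t = 0" unfolding h_def using z(2)[of t] xt0 c_def by simp
  have "g = h + z" unfolding h_def by simp
  hence phg: "\<phi> g = \<phi> h + c" using add[OF hA z(1)] phz by simp
  have small: "norm (\<phi> h) \<le> \<eta>" if eta: "\<eta> > 0" for \<eta>
  proof -
    obtain \<rho> where \<rho>: "\<rho> > 0" "\<And>s. dist s t < \<rho> \<Longrightarrow> dist (ap h s) (ap h t) < \<eta>"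
      using cont_ap[OF eta, of t h] by blast
    have hnear: "norm (ap h s) < \<eta>" if "dist s t < \<rho>" for s using \<rho>(2)[OF that] ht by simp
    obtain \<delta> where \<delta>: "\<delta> > 0" "\<And>s. \<rho> \<le> dist s t \<Longrightarrow> norm (ap x s) \<le> 1 - \<delta>"
      using pk \<rho>(1) nx unfolding peak_def by auto
    define r where "r = \<delta> / (norm h + 1)"
    have "norm h + 1 > 0" by (simp add: add_nonneg_pos)
    hence r: "r > 0" using \<delta>(1) r_def by simp
    have rh: "r * norm h < \<delta>"
    proof -
      have "r * norm h = \<delta> * (norm h / (norm h + 1))" unfolding r_def by simp
      also have "\<dots> < \<delta> * 1"
      proof (intro mult_strict_left_mono)
        have "norm h + 1 > 0" by (simp add: add_nonneg_pos)
        thus "norm h / (norm h + 1) < 1" by (simp add: divide_less_eq)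
      qed (use \<delta>(1) in auto)
      finally show ?thesis by simp
    qed
    obtain mu where mu: "norm mu = 1" "mu * of_real (norm (\<phi> h)) = \<phi> h" using unit_lam by blast
    have mu0: "mu \<noteq> 0" using mu(1) by auto
    define \<alpha> where "\<alpha> = of_real r * inverse mu"
    have na: "norm \<alpha> = r" unfolding \<alpha>_def using r mu(1) by (simp add: norm_mult norm_inverse)
    have aph: "\<alpha> * \<phi> h = of_real (r * norm (\<phi> h))"
      unfolding \<alpha>_def using mu0 by (subst mu(2)[symmetric]) (simp add: field_simps)
    obtain w where w: "w \<in> A" "\<And>s. ap w s = \<alpha> * ap h s" using sub_smult[OF sub hA] by blast
    have phw: "\<phi> w = \<alpha> * \<phi> h" using hom[OF hA w(1)] w(2) by simp
    define y where "y = x + w"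
    have yA: "y \<in> A" unfolding y_def by (rule sub_add[OF sub xA w(1)])
    have "\<phi> y = of_real (1 + r * norm (\<phi> h))" unfolding y_def using add[OF xA w(1)] phix phw aph by simp
    hence "norm (\<phi> y) = 1 + r * norm (\<phi> h)" using r by (simp only: norm_of_real) simp
    moreover have "norm y \<le> 1 + r * \<eta>"
    proof (rule norm_bound)
      fix s
      have "norm (ap y s) \<le> norm (ap x s) + r * norm (ap h s)"
      proof -
        have "ap y s = ap x s + \<alpha> * ap h s" unfolding y_def using w(2)[of s] by simp
        hence "norm (ap y s) \<le> norm (ap x s) + norm (\<alpha> * ap h s)" by (simp add: norm_triangle_ineq)
        thus ?thesis using na by (simp add: norm_mult)
      qed
      also have "\<dots> \<le> 1 + r * \<eta>"
      proof (cases "dist s t < \<rho>")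
        case True
        have "r * norm (ap h s) \<le> r * \<eta>" using hnear[OF True] r by (intro mult_left_mono) auto
        thus ?thesis using norm_bounded[of x s] nx by simp
      next
        case False
        have "r * norm (ap h s) \<le> r * norm h" using norm_bounded[of h s] r by (intro mult_left_mono) auto
        moreover have "norm (ap x s) \<le> 1 - \<delta>" using False \<delta>(2) by simp
        moreover have "0 \<le> r * \<eta>" using r eta by simp
        ultimately show ?thesis using rh by linarith
      qed
      finally show "norm (ap y s) \<le> 1 + r * \<eta>" .
    qed
    ultimately have "r * norm (\<phi> h) \<le> r * \<eta>" using bd[OF yA] by linarith
    thus ?thesis using r by simp
  qed
  have "\<phi> h = 0"
  proof (rule ccontr)
    assume "\<phi> h \<noteq> 0"
    hence "norm (\<phi> h) > 0" by simp
    from small[of "norm (\<phi> h) / 2"] this show False by simp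
  qed
  thus ?thesis using phg c_def by simp
qed

lemma smooth:
  fixes A :: "('a::metric_space \<Rightarrow>\<^sub>C 'b::real_normed_field) set"
  assumes sub: "subalgebra_Cb A" and re1: "re 1 = 1" and reI: "\<And>z. norm z \<le> 1 \<Longrightarrow> re z = 1 \<Longrightarrow> z = 1"
    and xA: "x \<in> A" and nx: "norm x = 1" and pk: "peak x t"
  shows "smooth_point re A x"
  unfolding smooth_point_def
proof (intro conjI ballI impI)
  show "x \<in> A" "norm x \<le> 1" using xA nx by auto
  have xt: "norm (ap x t) = 1" using pk nx unfolding peak_def by simp
  hence xt0: "ap x t \<noteq> 0" by auto
  show "\<exists>\<phi>\<in>dual_ball A. re (\<phi> x) = 1"
    using eval_dual[OF xt, of A] xt0 re1 by (intro bexI[of _ "\<lambda>g. ap g t / ap x t"]) auto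
  fix \<phi> \<psi> f
  assume ph: "\<phi> \<in> dual_ball A" and ps: "\<psi> \<in> dual_ball A"
    and re: "re (\<phi> x) = 1 \<and> re (\<psi> x) = 1" and fA: "f \<in> A"
  have "norm (\<phi> x) \<le> 1" using ph xA nx unfolding dual_ball_def by auto
  hence p1: "\<phi> x = 1" using reI re by blast
  have "norm (\<psi> x) \<le> 1" using ps xA nx unfolding dual_ball_def by auto
  hence p2: "\<psi> x = 1" using reI re by blast
  show "\<phi> f = \<psi> f"
    using uniq[OF sub xA nx pk ph p1 fA] uniq[OF sub xA nx pk ps p2 fA] by simp
qed



lemma main:
  fixes A :: "('a::complete_space \<Rightarrow>\<^sub>C 'b::{real_normed_field,banach}) set"
  assumes sub: "subalgebra_Cb A" and cl: "closed A" and nrm: "norming (strong_peak_points A) A"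
    and re1: "re 1 = 1" and reI: "\<And>z. norm z \<le> 1 \<Longrightarrow> re z = 1 \<Longrightarrow> z = 1"
  shows "conclusion_smooth re A"
proof (cases "strong_peak_points A = {}")
  case True
  have "unit_sphere_A A = {}"
  proof -
    have nle: "norm f \<le> 0" if fA: "f \<in> A" for f
    proof -
      have "(\<forall>t\<in>strong_peak_points A. norm (ap f t) \<le> 0) \<longrightarrow> norm f \<le> 0"
        using nrm fA unfolding norming_def by blast
      moreover have "\<forall>t\<in>strong_peak_points A. norm (ap f t) \<le> 0" using True by simp
      ultimately show ?thesis by blast
    qed
    thus ?thesis unfolding unit_sphere_A_def by (force dest: nle)
  qed
  moreover have "gdelta_in {} ({} :: ('a \<Rightarrow>\<^sub>C 'b) set)"
    unfolding gdelta_in_def by (intro exI[of _ "\<lambda>n. {}"]) auto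
  ultimately show ?thesis unfolding conclusion_smooth_def by (intro exI[of _ "{}"]) auto
next
  case False
  define G0 where "G0 = \<Inter> (range (Uset A))"
  have "Uset A 0 \<subseteq> A" unfolding Uset_def by blast
  hence G0A: "G0 \<subseteq> A" unfolding G0_def by blast
  have cm: "completely_metrizable_space (top_of_set A)"
    by (rule completely_metrizable_space_closedin[OF completely_metrizable_space_euclidean])
       (rule iffD1[OF closed_closedin cl])
  have dU: "A \<subseteq> closure (Uset A n)" for n
  proof
    fix x assume "x \<in> A"
    show "x \<in> closure (Uset A n)" unfolding closure_approachable
      using Uset_dense[OF sub nrm False \<open>x\<in>A\<close>] by blast
  qed
  have "top_of_set A closure_of \<Inter> (range (Uset A)) = topspace (top_of_set A)"
  proof (rule Baire_category)
    show "completely_metrizable_space (top_of_set A) \<or> locally_compact_space (top_of_set A) \<and> regular_space (top_of_set A)"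
      using cm by blast
    show "countable (range (Uset A))" by simp
    fix T assume "T \<in> range (Uset A)"
    then obtain n where T: "T = Uset A n" by blast
    have "T \<subseteq> A" unfolding T Uset_def by auto
    hence "top_of_set A closure_of T = A \<inter> closure T"
      by (simp add: closure_of_subtopology Int_absorb1)
    also have "\<dots> = A" using dU[of n] T by auto
    finally show "openin (top_of_set A) T \<and> top_of_set A closure_of T = topspace (top_of_set A)"
      using Uset_open[of A n] T by simp
  qed
  hence AG: "A \<inter> closure (A \<inter> G0) = A" unfolding G0_def
    by (simp add: closure_of_subtopology)
  hence dense0: "\<exists>y\<in>G0. dist y x < e" if xe: "x \<in> A" "e > 0" for x e
  proof -
    have "x \<in> closure (A \<inter> G0)" using xe AG by blast
    then obtain y where "y \<in> A \<inter> G0" "dist y x < e" using xe(2) unfolding closure_approachable by blast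
    thus ?thesis by blast
  qed
  define S where "S = unit_sphere_A A"
  define G where "G = {x\<in>G0. norm x = 1}"
  have GS: "G \<subseteq> S" unfolding G_def S_def unit_sphere_A_def using G0A by auto
  have gd: "gdelta_in S G"
    unfolding gdelta_in_def
  proof (intro exI[of _ "\<lambda>n. S \<inter> Uset A n"] conjI allI)
    fix n
    obtain T where T: "open T" "Uset A n = A \<inter> T" using Uset_open[of A n] unfolding openin_open by blast
    have "S \<subseteq> A" unfolding S_def unit_sphere_A_def by auto
    hence "S \<inter> Uset A n = S \<inter> T" using T(2) by auto
    thus "openin (top_of_set S) (S \<inter> Uset A n)" using T(1) by (simp add: openin_open_Int)
  next
    have "(\<Inter>n. S \<inter> Uset A n) = S \<inter> G0" unfolding G0_def by auto
    moreover have "S \<inter> G0 = G" using G0A unfolding G_def S_def unit_sphere_A_def by auto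
    ultimately show "G = (\<Inter>n. S \<inter> Uset A n)" by simp
  qed
  have dense: "S \<subseteq> closure G"
  proof
    fix x assume xS: "x \<in> S"
    hence xA: "x \<in> A" and nx: "norm x = 1" unfolding S_def unit_sphere_A_def by auto
    show "x \<in> closure G" unfolding closure_approachable
    proof (intro allI impI)
      fix e :: real assume e: "e > 0"
      obtain f where f: "f \<in> G0" "dist f x < min (e/2) (1/2)"
        using dense0[OF xA, of "min (e/2) (1/2)"] e by auto
      have fU: "\<And>n. f \<in> Uset A n" using f(1) unfolding G0_def by auto
      have nf: "norm f > 0" using Uset_pos[OF fU[of 0]] .
      define y where "y = (1 / norm f) *\<^sub>R f"
      have yU: "\<And>n. y \<in> Uset A n" unfolding y_def using Uset_scale[OF sub fU] nf by simp
      have ny: "norm y = 1" unfolding y_def using nf by simp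
      have yG: "y \<in> G" unfolding G_def G0_def using yU ny by auto
      have "y - f = (1 / norm f - 1) *\<^sub>R f" unfolding y_def by (simp add: scaleR_diff_left)
      hence "dist y f = \<bar>1 / norm f - 1\<bar> * norm f" by (simp add: dist_norm)
      also have "\<dots> = \<bar>1 - norm f\<bar>"
      proof -
        have "\<bar>1 / norm f - 1\<bar> * norm f = \<bar>(1 / norm f - 1) * norm f\<bar>" using nf by (simp add: abs_mult)
        also have "(1 / norm f - 1) * norm f = 1 - norm f" using nf by (simp add: field_simps)
        finally show ?thesis .
      qed
      also have "\<dots> \<le> dist f x"
        using nx norm_triangle_ineq3[of f x] by (simp add: dist_norm)
      finally have "dist y f \<le> dist f x" .
      hence "dist y x < e" using dist_triangle[of y x f] f(2) by simp
      thus "\<exists>y\<in>G. dist y x < e" using yG by blast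
    qed
  qed
  have sm: "G \<subseteq> {x. smooth_point re A x}"
  proof
    fix x assume "x \<in> G"
    hence xG0: "x \<in> G0" and nx: "norm x = 1" unfolding G_def by auto
    have "\<forall>n. x \<in> Uset A n" using xG0 unfolding G0_def by auto
    then obtain t where pk: "peak x t" using inter_peak by blast
    have "x \<in> A" using xG0 G0A by blast
    hence "smooth_point re A x" using smooth[where A=A and re=re and x=x and t=t] sub re1 reI nx pk by blast
    thus "x \<in> {x. smooth_point re A x}" by simp
  qed
  show ?thesis unfolding conclusion_smooth_def S_def[symmetric]
    by (rule exI[of _ G]) (intro conjI GS gd dense sm)
qed

lemma complex_reI: "cmod z \<le> 1 \<Longrightarrow> Re z = 1 \<Longrightarrow> z = 1"
proof -
  assume a: "cmod z \<le> 1" "Re z = 1"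
  have "(cmod z)^2 = (Re z)^2 + (Im z)^2" by (rule cmod_power2)
  moreover have "(cmod z)^2 \<le> 1" using a(1) by (simp add: power_le_one)
  ultimately have "(Im z)^2 \<le> 0" using a(2) by simp
  hence "Im z = 0" by simp
  thus "z = 1" using a(2) by (simp add: complex_eq_iff)
qed

theorem corollary2p2:
  shows "(\<forall>A :: ('a::complete_space \<Rightarrow>\<^sub>C real) set. subalgebra_Cb A \<and> closed A \<and> norming (strong_peak_points A) A
            \<longrightarrow> conclusion_smooth (\<lambda>x. x) A)
       \<and> (\<forall>A :: ('a::complete_space \<Rightarrow>\<^sub>C complex) set. subalgebra_Cb A \<and> closed A \<and> norming (strong_peak_points A) A
            \<longrightarrow> conclusion_smooth Re A)"
proof (intro conjI allI impI)
  fix A :: "('a::complete_space \<Rightarrow>\<^sub>C real) set"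
  assume "subalgebra_Cb A \<and> closed A \<and> norming (strong_peak_points A) A"
  thus "conclusion_smooth (\<lambda>x. x) A" by (intro main) auto
next
  fix A :: "('a::complete_space \<Rightarrow>\<^sub>C complex) set"
  assume "subalgebra_Cb A \<and> closed A \<and> norming (strong_peak_points A) A"
  thus "conclusion_smooth Re A" by (intro main) (auto intro: complex_reI)
qed

end
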